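(* Let $z\in\mathbb{R}^n$, $\lambda_1,\lambda_2>0$, $l\le0\le u$ in $\mathbb{R}^n$, $\omega_i(\alpha)=\lambda_2|\alpha|_0+\delta_{[l_i,u_i]}(\alpha)$, $H(0)=-\lambda_1$, $H(s)=\min_{y\in\mathbb{R}^s}\{\frac12\|y-z_{1:s}\|^2+\lambda_1\sum_{j=1}^{s-1}|y_j-y_{j+1}|_0+\sum_{j=1}^s\omega_j(y_j)\}$ for $s\in[n]$, and $P_s(i,\alpha)=H(i)+\frac12\|\alpha\mathbf{1}-z_{i+1:s}\|^2+\sum_{j=i+1}^s\omega_j(\alpha)+\lambda_1$ for $i\in[0\!:\!s-1]$, $\alpha\in\mathbb{R}$. For each $s\in[n]$ let $P_s^*(\alpha)=\min_{i\in[0:s-1]}P_s(i,\alpha)$. Then: (i) for all $\alpha\in\mathbb{R}$, $P_1^*(\alpha)=\frac12(\alpha-z_1)^2+\omega_1(\alpha)$ and, for $s\in[2\!:\!n]$, $$P_s^*(\alpha)=\min\Big\{P_{s-1}^*(\alpha),\ \min_{\alpha'\in\mathbb{R}}P_{s-1}^*(\alpha')+\lambda_1\Big\}+\tfrac12(\alpha-z_s)^2+\omega_s(\alpha);$$ (ii) let $\mathcal{R}_1^0=\mathbb{R}$ and, for $s\in[2\!:\!n]$, $\mathcal{R}_s^{s-1}=\{\alpha\in\mathbb{R}: P_{s-1}^*(\alpha)\ge\min_{\alpha'\in\mathbb{R}}P_{s-1}^*(\alpha')+\lambda_1\}$ and $\mathcal{R}_s^i=\mathcal{R}_{s-1}^i\cap(\mathcal{R}_s^{s-1})^c$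 for $i\in[0\!:\!s-2]$. Then (a) for each $s\in[2\!:\!n]$, $\bigcup_{i\in[0:s-1]}\mathcal{R}_s^i=\mathbb{R}$ and $\mathcal{R}_s^i\cap\mathcal{R}_s^j=\emptyset$ for all $i\neq j$ in $[0\!:\!s-1]$; (b) for each $s\in[n]$ and $i\in[0\!:\!s-1]$, $P_s^*(\alpha)=P_s(i,\alpha)$ whenever $\alpha\in\mathcal{R}_s^i$.
   Context: $|t|_0=0$ if $t=0$ and $1$ otherwise; $\delta_{[a,b]}$ is the indicator of $[a,b]$; $[j\!:\!k]=\{j,\dots,k\}$, $[n]=[1\!:\!n]$, $z_{j:k}=(z_j,\dots,z_k)$, $\mathbf 1$ the all-ones vector; $(\cdot)^c$ denotes complement in $\mathbb{R}$. *)

theory Defs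
  imports "HOL-Analysis.Analysis"
begin

definition l0 :: "real \<Rightarrow> real" where
  "l0 t = (if t = 0 then 0 else 1)"

definition delta_ind :: "real \<Rightarrow> real \<Rightarrow> real \<Rightarrow> ereal" where
  "delta_ind a b x = (if a \<le> x \<and> x \<le> b then 0 else \<infinity>)"

definition omega :: "(nat \<Rightarrow> real) \<Rightarrow> (nat \<Rightarrow> real) \<Rightarrow> real \<Rightarrow> nat \<Rightarrow> real \<Rightarrow> ereal" where
  "omega l u lam2 i a = ereal (lam2 * l0 a) + delta_ind (l i) (u i) a"

definition H :: "(nat \<Rightarrow> real) \<Rightarrow> (nat \<Rightarrow> real) \<Rightarrow> (nat \<Rightarrow> real) \<Rightarrow> real \<Rightarrow> real \<Rightarrow> nat \<Rightarrow> ereal" where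
  "H z l u lam1 lam2 s =
     (if s = 0 then ereal (- lam1)
      else (INF y :: nat \<Rightarrow> real.
              ereal ((1/2) * (\<Sum>j=1..s. (y j - z j)^2)
                     + lam1 * (\<Sum>j=1..s-1. l0 (y j - y (j+1))))
              + (\<Sum>j=1..s. omega l u lam2 j (y j))))"

definition P :: "(nat \<Rightarrow> real) \<Rightarrow> (nat \<Rightarrow> real) \<Rightarrow> (nat \<Rightarrow> real) \<Rightarrow> real \<Rightarrow> real \<Rightarrow> nat \<Rightarrow> nat \<Rightarrow> real \<Rightarrow> ereal" where
  "P z l u lam1 lam2 s i a =
     H z l u lam1 lam2 i + ereal ((1/2) * (\<Sum>j=i+1..s. (a - z j)^2))
     + (\<Sum>j=i+1..s. omega l u lam2 j a) + ereal lam1"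

definition Pstar :: "(nat \<Rightarrow> real) \<Rightarrow> (nat \<Rightarrow> real) \<Rightarrow> (nat \<Rightarrow> real) \<Rightarrow> real \<Rightarrow> real \<Rightarrow> nat \<Rightarrow> real \<Rightarrow> ereal" where
  "Pstar z l u lam1 lam2 s a = Min ((\<lambda>i. P z l u lam1 lam2 s i a) ` {0..<s})"

text \<open>Regions R_s^i (values for indices outside i in [0:s-1] are irrelevant conventions).\<close>
fun R :: "(nat \<Rightarrow> real) \<Rightarrow> (nat \<Rightarrow> real) \<Rightarrow> (nat \<Rightarrow> real) \<Rightarrow> real \<Rightarrow> real \<Rightarrow> nat \<Rightarrow> nat \<Rightarrow> real set" where
  "R z l u lam1 lam2 0 i = {}"
| "R z l u lam1 lam2 (Suc 0) i = (if i = 0 then UNIV else {})"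
| "R z l u lam1 lam2 (Suc (Suc m)) i =
     (let T = {a. Pstar z l u lam1 lam2 (Suc m) a \<ge>
                  (INF a'. Pstar z l u lam1 lam2 (Suc m) a') + ereal lam1}
      in if i = Suc m then T
         else if i < Suc m then R z l u lam1 lam2 (Suc m) i \<inter> - T
         else {})"

end

theory Submission imports Defs begin

definition gg :: "(nat \<Rightarrow> real) \<Rightarrow> (nat \<Rightarrow> real) \<Rightarrow> (nat \<Rightarrow> real) \<Rightarrow> real \<Rightarrow> nat \<Rightarrow> real \<Rightarrow> ereal" where
  "gg z l u lam2 j a = ereal ((1/2) * (a - z j)^2) + omega l u lam2 j a"

definition FF :: "(nat \<Rightarrow> real) \<Rightarrow> (nat \<Rightarrow> real) \<Rightarrow> (nat \<Rightarrow> real) \<Rightarrow> real \<Rightarrow> real \<Rightarrow> nat \<Rightarrow> (nat \<Rightarrow> real) \<Rightarrow> ereal" where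
  "FF z l u lam1 lam2 t y = (\<Sum>j=1..t. gg z l u lam2 j (y j)) + ereal (lam1 * (\<Sum>j=1..t-1. l0 (y j - y (j+1))))"

lemma split_sum: "i \<le> t \<Longrightarrow> sum f {Suc 0..t} = sum f {Suc 0..i} + sum f {i+1..t}"
  using sum.ub_add_nat[of "Suc 0" i f "t - i"] by simp

lemma l0_ge: "0 \<le> l0 x" and l0_le: "l0 x \<le> 1" by (auto simp: l0_def)

lemma omega_nonneg: "lam2 \<ge> 0 \<Longrightarrow> 0 \<le> omega l u lam2 j a"
  by (auto simp: omega_def delta_ind_def l0_def)

lemma gg_nonneg: "lam2 \<ge> 0 \<Longrightarrow> 0 \<le> gg z l u lam2 j a"
  unfolding gg_def using omega_nonneg[of lam2 l u j a] by (simp add: add_nonneg_nonneg)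

lemma sum_gg_nonneg: "lam2 \<ge> 0 \<Longrightarrow> 0 \<le> (\<Sum>j\<in>A. gg z l u lam2 j (f j))"
  by (simp add: gg_nonneg sum_nonneg)

lemma H_eq: "t \<noteq> 0 \<Longrightarrow> H z l u lam1 lam2 t = (INF y. FF z l u lam1 lam2 t y)"
  unfolding H_def FF_def gg_def
  by (simp add: sum.distrib ac_simps sum_divide_distrib flip: plus_ereal.simps)

lemma P_eq: "P z l u lam1 lam2 t i a = H z l u lam1 lam2 i + (\<Sum>j=i+1..t. gg z l u lam2 j a) + ereal lam1"
  unfolding P_def gg_def
  by (simp add: sum.distrib ac_simps sum_divide_distrib)

context
  fixes z l u :: "nat \<Rightarrow> real" and lam1 lam2 :: real
  assumes lam1: "lam1 > 0" and lam2: "lam2 > 0"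
begin

lemma P0: "P z l u lam1 lam2 t 0 a = (\<Sum>j=1..t. gg z l u lam2 j a)"
proof -
  have "0 \<le> (\<Sum>j=1..t. gg z l u lam2 j a)" using sum_gg_nonneg[of lam2] lam2 by simp
  then show ?thesis unfolding P_eq H_def
    by (cases "(\<Sum>j=1..t. gg z l u lam2 j a)") auto
qed

lemma P_Suc: "i \<le> s \<Longrightarrow> P z l u lam1 lam2 (Suc s) i a = P z l u lam1 lam2 s i a + gg z l u lam2 (Suc s) a"
  unfolding P_eq by (simp add: ac_simps)

lemma FF_nonneg: "0 \<le> FF z l u lam1 lam2 t y"
  unfolding FF_def using sum_gg_nonneg[of lam2] lam2 lam1
  by (intro add_nonneg_nonneg) (auto intro!: sum_nonneg mult_nonneg_nonneg simp: l0_ge)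

lemma H_le_P: assumes "i < t" shows "H z l u lam1 lam2 t \<le> P z l u lam1 lam2 t i a"
proof (cases "i = 0")
  case True
  have "H z l u lam1 lam2 t \<le> FF z l u lam1 lam2 t (\<lambda>_. a)"
    using assms by (simp add: H_eq INF_lower)
  also have "\<dots> = P z l u lam1 lam2 t 0 a" by (simp add: FF_def P0 l0_def)
  finally show ?thesis using True by simp
next
  case False
  define S where "S = (\<Sum>j=i+1..t. gg z l u lam2 j a)"
  have "S \<ge> 0" unfolding S_def using sum_gg_nonneg[of lam2] lam2 by simp
  have key: "H z l u lam1 lam2 t \<le> FF z l u lam1 lam2 i y + (S + ereal lam1)" for y
  proof -
    define y' where "y' = (\<lambda>j. if j \<le> i then y j else a)"
    have "H z l u lam1 lam2 t \<le> FF z l u lam1 lam2 t y'"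
      using assms by (simp add: H_eq INF_lower)
    have s1: "(\<Sum>j=1..t. gg z l u lam2 j (y' j)) = (\<Sum>j=1..i. gg z l u lam2 j (y j)) + S"
      using split_sum[of i t "\<lambda>j. gg z l u lam2 j (y' j)"] assms unfolding S_def
      by (simp add: y'_def)
    obtain k where k: "i = Suc k" using False not0_implies_Suc by blast
    have j1: "(\<Sum>j=1..t-1. l0 (y' j - y' (j+1))) = (\<Sum>j=1..i. l0 (y' j - y' (j+1)))"
      using split_sum[of i "t-1" "\<lambda>j. l0 (y' j - y' (j+1))"] assms
      by (simp add: y'_def l0_def)
    also have "\<dots> = (\<Sum>j=1..k. l0 (y j - y (j+1))) + l0 (y i - a)"
    proof -
      have "(\<Sum>j=1..i. l0 (y' j - y' (j+1))) = (\<Sum>j=1..k. l0 (y' j - y' (j+1))) + l0 (y' i - y' (i+1))"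
        using k by simp
      moreover have "(\<Sum>j=1..k. l0 (y' j - y' (j+1))) = (\<Sum>j=1..k. l0 (y j - y (j+1)))"
        using k by (intro sum.cong) (auto simp: y'_def)
      ultimately show ?thesis by (simp add: y'_def)
    qed
    also have "\<dots> \<le> (\<Sum>j=1..i-1. l0 (y j - y (j+1))) + 1" using k l0_le by simp
    finally have J: "(\<Sum>j=1..t-1. l0 (y' j - y' (j+1))) \<le> (\<Sum>j=1..i-1. l0 (y j - y (j+1))) + 1" .
    have "lam1 * (\<Sum>j=1..t-1. l0 (y' j - y' (j+1))) \<le> lam1 * (\<Sum>j=1..i-1. l0 (y j - y (j+1))) + lam1"
      using lam1 mult_left_mono[OF J, of lam1] by (simp add: algebra_simps)
    then have "ereal (lam1 * (\<Sum>j=1..t-1. l0 (y' j - y' (j+1)))) \<le> ereal (lam1 * (\<Sum>j=1..i-1. l0 (y j - y (j+1)))) + ereal lam1"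
      by simp
    then have "FF z l u lam1 lam2 t y' \<le> (\<Sum>j=1..i. gg z l u lam2 j (y j)) + S + (ereal (lam1 * (\<Sum>j=1..i-1. l0 (y j - y (j+1)))) + ereal lam1)"
      unfolding FF_def s1 by (rule add_left_mono)
    also have "\<dots> = FF z l u lam1 lam2 i y + (S + ereal lam1)"
      unfolding FF_def by (simp only: ac_simps)
    finally show ?thesis using \<open>H z l u lam1 lam2 t \<le> FF z l u lam1 lam2 t y'\<close> by simp
  qed
  have "H z l u lam1 lam2 t \<le> (INF y. FF z l u lam1 lam2 i y + (S + ereal lam1))"
    using key by (simp add: le_INF_iff)
  also have "\<dots> = (INF y. FF z l u lam1 lam2 i y) + (S + ereal lam1)"
    using \<open>S \<ge> 0\<close> lam1 by (intro INF_ereal_add_left) (auto simp: FF_nonneg)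
  also have "\<dots> = P z l u lam1 lam2 t i a"
    using False unfolding P_eq H_eq[OF False] S_def by (simp add: ac_simps)
  finally show ?thesis .
qed


end

context
  fixes z l u :: "nat \<Rightarrow> real" and lam1 lam2 :: real
  assumes lam1: "lam1 > 0" and lam2: "lam2 > 0"
begin

lemma const_tail:
  assumes "\<And>j. m \<le> j \<Longrightarrow> j < t \<Longrightarrow> y j = y (Suc j)" "m \<le> j" "j \<le> t"
  shows "y j = y t"
  using assms(3,2)
proof (induction j rule: inc_induct)
  case base then show ?case by simp
next
  case (step n) then show ?case using assms(1)[of n] by simp
qed

lemma exists_P_le: assumes "1 \<le> t"
  shows "\<exists>i<t. \<exists>a. P z l u lam1 lam2 t i a \<le> FF z l u lam1 lam2 t y"
proof (cases "\<exists>j\<in>{1..t-1}. y j \<noteq> y (Suc j)")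
  case False
  define a where "a = y t"
  have c: "y j = a" if "1 \<le> j" "j \<le> t" for j
  proof -
    have step: "y j = y (Suc j)" if "1 \<le> j" "j < t" for j
      using False that by auto
    show ?thesis unfolding a_def by (rule const_tail[of 1 t y, OF step]) (use that in auto)
  qed
  have s1: "(\<Sum>j=1..t. gg z l u lam2 j (y j)) = (\<Sum>j=1..t. gg z l u lam2 j a)"
    using c by (intro sum.cong) auto
  have s2: "(\<Sum>j=1..t-1. l0 (y j - y (j+1))) = 0"
    using False by (intro sum.neutral) (auto simp: l0_def)
  have "FF z l u lam1 lam2 t y = (\<Sum>j=1..t. gg z l u lam2 j a)"
    unfolding FF_def s1 s2 by simp
  then have "P z l u lam1 lam2 t 0 a \<le> FF z l u lam1 lam2 t y" by (simp add: P0[OF lam1 lam2])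
  then show ?thesis using assms by (intro exI[of _ 0]) auto
next
  case True
  define A where "A = {j\<in>{1..t-1}. y j \<noteq> y (Suc j)}"
  define i where "i = Max A"
  have fA: "finite A" "A \<noteq> {}" using True unfolding A_def by auto
  have iA: "i \<in> A" unfolding i_def using fA by (rule Max_in)
  then have i1: "1 \<le> i" "i \<le> t - 1" "y i \<noteq> y (Suc i)" unfolding A_def by auto
  have after: "y j = y (Suc j)" if "Suc i \<le> j" "j < t" for j
  proof (rule ccontr)
    assume "y j \<noteq> y (Suc j)"
    then have "j \<in> A" using that i1 unfolding A_def by auto
    then have "j \<le> i" unfolding i_def using fA by simp
    then show False using that by simp
  qed
  define a where "a = y t"
  have c: "y j = a" if "Suc i \<le> j" "j \<le> t" for j
    unfolding a_def using const_tail[of "Suc i" t y j] after that by blast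
  define S where "S = (\<Sum>j=i+1..t. gg z l u lam2 j a)"
  obtain k where k: "i = Suc k" using i1 by (cases i) auto
  have s1: "(\<Sum>j=1..t. gg z l u lam2 j (y j)) = (\<Sum>j=1..i. gg z l u lam2 j (y j)) + S"
  proof -
    have "(\<Sum>j=i+1..t. gg z l u lam2 j (y j)) = S"
      unfolding S_def by (rule sum.cong) (auto simp: c)
    then show ?thesis using split_sum[of i t "\<lambda>j. gg z l u lam2 j (y j)"] i1 by simp
  qed
  have "(\<Sum>j=1..t-1. l0 (y j - y (j+1))) = (\<Sum>j=1..i. l0 (y j - y (j+1))) + (\<Sum>j=i+1..t-1. l0 (y j - y (j+1)))"
    using split_sum[of i "t-1" "\<lambda>j. l0 (y j - y (j+1))"] i1 by simp
  also have "(\<Sum>j=i+1..t-1. l0 (y j - y (j+1))) = 0"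
  proof (rule sum.neutral, rule ballI)
    fix j assume "j \<in> {i+1..t-1}"
    then have "Suc i \<le> j" "j < t" using assms by auto
    then have "y j = y (j+1)" using after[of j] by simp
    then show "l0 (y j - y (j+1)) = 0" by (simp add: l0_def)
  qed
  also have "(\<Sum>j=1..i. l0 (y j - y (j+1))) = (\<Sum>j=1..i-1. l0 (y j - y (j+1))) + 1"
    using i1 k by (simp add: l0_def)
  finally have J: "lam1 * (\<Sum>j=1..t-1. l0 (y j - y (j+1))) = lam1 * (\<Sum>j=1..i-1. l0 (y j - y (j+1))) + lam1"
    by (simp add: algebra_simps)
  have "FF z l u lam1 lam2 t y = (\<Sum>j=1..i. gg z l u lam2 j (y j)) + S + (ereal (lam1 * (\<Sum>j=1..i-1. l0 (y j - y (j+1)))) + ereal lam1)"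
    unfolding FF_def s1 J by simp
  also have "\<dots> = FF z l u lam1 lam2 i y + S + ereal lam1"
    unfolding FF_def by (simp only: ac_simps)
  finally have eq: "FF z l u lam1 lam2 t y = FF z l u lam1 lam2 i y + S + ereal lam1" .
  have "H z l u lam1 lam2 i \<le> FF z l u lam1 lam2 i y"
    using i1 by (simp add: H_eq INF_lower)
  then have "P z l u lam1 lam2 t i a \<le> FF z l u lam1 lam2 t y"
    unfolding eq P_eq S_def by (intro add_right_mono)
  then show ?thesis using i1 assms by (intro exI[of _ i]) auto
qed

lemma Pstar_in: "1 \<le> t \<Longrightarrow> \<exists>i<t. Pstar z l u lam1 lam2 t a = P z l u lam1 lam2 t i a"
proof -
  assume "1 \<le> t"
  then have "Min ((\<lambda>i. P z l u lam1 lam2 t i a) ` {0..<t}) \<in> (\<lambda>i. P z l u lam1 lam2 t i a) ` {0..<t}"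
    by (intro Min_in) auto
  then show ?thesis unfolding Pstar_def by auto
qed

lemma Pstar_le: "i < t \<Longrightarrow> Pstar z l u lam1 lam2 t a \<le> P z l u lam1 lam2 t i a"
  unfolding Pstar_def by (rule Min_le) auto

lemma bellman: assumes "1 \<le> t" shows "(INF a. Pstar z l u lam1 lam2 t a) = H z l u lam1 lam2 t"
proof (rule antisym)
  show "H z l u lam1 lam2 t \<le> (INF a. Pstar z l u lam1 lam2 t a)"
  proof (rule INF_greatest)
    fix a
    obtain i where "i < t" "Pstar z l u lam1 lam2 t a = P z l u lam1 lam2 t i a"
      using Pstar_in[OF assms] by blast
    then show "H z l u lam1 lam2 t \<le> Pstar z l u lam1 lam2 t a" using H_le_P[OF lam1 lam2 \<open>i < t\<close>] by simp
  qed
  have t0: "t \<noteq> 0" using assms by simp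
  show "(INF a. Pstar z l u lam1 lam2 t a) \<le> H z l u lam1 lam2 t"
    unfolding H_eq[OF t0]
  proof (rule INF_greatest)
    fix y
    obtain i a where ia: "i < t" "P z l u lam1 lam2 t i a \<le> FF z l u lam1 lam2 t y"
      using exists_P_le[OF assms] by blast
    have "Pstar z l u lam1 lam2 t a \<le> P z l u lam1 lam2 t i a" using ia(1) by (rule Pstar_le)
    then have "Pstar z l u lam1 lam2 t a \<le> FF z l u lam1 lam2 t y"
      using ia(2) by (rule order_trans)
    then show "(INF a. Pstar z l u lam1 lam2 t a) \<le> FF z l u lam1 lam2 t y"
      by (rule INF_lower2[OF UNIV_I])
  qed
qed


lemma Pstar_Suc: assumes "1 \<le> s"
  shows "Pstar z l u lam1 lam2 (Suc s) a = min (Pstar z l u lam1 lam2 s a) (H z l u lam1 lam2 s + ereal lam1) + gg z l u lam2 (Suc s) a"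
proof -
  define c where "c = gg z l u lam2 (Suc s) a"
  define f where "f = (\<lambda>i. P z l u lam1 lam2 (Suc s) i a)"
  define B where "B = (\<lambda>i. P z l u lam1 lam2 s i a) ` {0..<s}"
  have fin: "finite B" "B \<noteq> {}" unfolding B_def using assms by auto
  have iv: "{0..<Suc s} = insert s {0..<s}" by auto
  have fs: "f s = H z l u lam1 lam2 s + ereal lam1 + c"
    unfolding f_def c_def P_eq by (simp add: ac_simps)
  have img: "f ` {0..<s} = (\<lambda>x. x + c) ` B"
    unfolding f_def B_def c_def image_image by (rule image_cong) (auto simp: P_Suc[OF lam1 lam2])
  have mono: "mono (\<lambda>x::ereal. x + c)" by (rule monoI) (rule add_right_mono)
  have "Pstar z l u lam1 lam2 (Suc s) a = Min (f ` {0..<Suc s})" unfolding Pstar_def f_def ..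
  also have "\<dots> = min (f s) (Min (f ` {0..<s}))"
    unfolding iv image_insert using fin unfolding B_def by (subst Min_insert) auto
  also have "Min (f ` {0..<s}) = Min B + c"
    unfolding img using mono_Min_commute[OF mono fin] by simp
  also have "Min B = Pstar z l u lam1 lam2 s a" unfolding B_def Pstar_def ..
  finally have eq: "Pstar z l u lam1 lam2 (Suc s) a = min (H z l u lam1 lam2 s + ereal lam1 + c) (Pstar z l u lam1 lam2 s a + c)"
    unfolding fs .
  show ?thesis unfolding eq c_def[symmetric] min_def
    by (auto intro: add_right_mono simp: not_le less_imp_le add_right_mono antisym)
qed

definition TT where
  "TT m = {a. Pstar z l u lam1 lam2 (Suc m) a \<ge> (INF a'. Pstar z l u lam1 lam2 (Suc m) a') + ereal lam1}"

lemma R_SS: "R z l u lam1 lam2 (Suc (Suc m)) i =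
   (if i = Suc m then TT m else if i < Suc m then R z l u lam1 lam2 (Suc m) i \<inter> - TT m else {})"
  by (simp add: TT_def Let_def)

lemma R_part: "(\<Union>i\<in>{0..<Suc m}. R z l u lam1 lam2 (Suc m) i) = UNIV \<and>
   (\<forall>i\<in>{0..<Suc m}. \<forall>j\<in>{0..<Suc m}. i \<noteq> j \<longrightarrow> R z l u lam1 lam2 (Suc m) i \<inter> R z l u lam1 lam2 (Suc m) j = {})"
proof (induction m)
  case 0
  then show ?case by simp
next
  case (Suc m)
  have U: "(\<Union>i\<in>{0..<Suc (Suc m)}. R z l u lam1 lam2 (Suc (Suc m)) i) = UNIV"
  proof (rule set_eqI, rule iffI)
    fix x :: real
    show "x \<in> (\<Union>i\<in>{0..<Suc (Suc m)}. R z l u lam1 lam2 (Suc (Suc m)) i)"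
    proof (cases "x \<in> TT m")
      case True
      then show ?thesis by (intro UN_I[of "Suc m"]) (auto simp: R_SS TT_def)
    next
      case False
      from Suc.IH have "x \<in> (\<Union>i\<in>{0..<Suc m}. R z l u lam1 lam2 (Suc m) i)" by simp
      then obtain i where "i < Suc m" "x \<in> R z l u lam1 lam2 (Suc m) i" by auto
      then show ?thesis using False by (intro UN_I[of i]) (auto simp: R_SS TT_def)
    qed
  qed simp
  have D: "R z l u lam1 lam2 (Suc (Suc m)) i \<inter> R z l u lam1 lam2 (Suc (Suc m)) j = {}"
    if ij: "i < Suc (Suc m)" "j < Suc (Suc m)" "i \<noteq> j" for i j
  proof -
    consider "i = Suc m" | "j = Suc m" | "i < Suc m" "j < Suc m"
      using ij(1,2) by linarith
    then show ?thesis
    proof cases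
      case 1 then show ?thesis using ij by (auto simp: R_SS TT_def)
    next
      case 2 then show ?thesis using ij by (auto simp: R_SS TT_def)
    next
      case 3
      then have "R z l u lam1 lam2 (Suc m) i \<inter> R z l u lam1 lam2 (Suc m) j = {}"
        using Suc.IH ij by auto
      then show ?thesis using 3 by (auto simp: R_SS TT_def)
    qed
  qed
  show ?case using U D by auto
qed

lemma R_val: "i < Suc m \<Longrightarrow> a \<in> R z l u lam1 lam2 (Suc m) i \<Longrightarrow> Pstar z l u lam1 lam2 (Suc m) a = P z l u lam1 lam2 (Suc m) i a"
proof (induction m arbitrary: i)
  case 0
  then show ?case by (simp add: Pstar_def)
next
  case (Suc m)
  have bm: "(INF a'. Pstar z l u lam1 lam2 (Suc m) a') = H z l u lam1 lam2 (Suc m)"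
    by (rule bellman) simp
  have PS: "Pstar z l u lam1 lam2 (Suc (Suc m)) a = min (Pstar z l u lam1 lam2 (Suc m) a) (H z l u lam1 lam2 (Suc m) + ereal lam1) + gg z l u lam2 (Suc (Suc m)) a"
    by (rule Pstar_Suc) simp
  show ?case
  proof (cases "i = Suc m")
    case True
    then have "a \<in> TT m" using Suc.prems by (simp add: R_SS TT_def)
    then have "H z l u lam1 lam2 (Suc m) + ereal lam1 \<le> Pstar z l u lam1 lam2 (Suc m) a"
      unfolding TT_def bm by simp
    then have "Pstar z l u lam1 lam2 (Suc (Suc m)) a = H z l u lam1 lam2 (Suc m) + ereal lam1 + gg z l u lam2 (Suc (Suc m)) a"
      unfolding PS by (simp add: min_def)
    also have "\<dots> = P z l u lam1 lam2 (Suc (Suc m)) i a"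
      unfolding True P_eq by (simp add: ac_simps)
    finally show ?thesis .
  next
    case False
    then have i: "i < Suc m" using Suc.prems by simp
    then have aR: "a \<in> R z l u lam1 lam2 (Suc m) i" "a \<notin> TT m" using Suc.prems by (auto simp: R_SS TT_def)
    then have "\<not> H z l u lam1 lam2 (Suc m) + ereal lam1 \<le> Pstar z l u lam1 lam2 (Suc m) a"
      unfolding TT_def bm by simp
    then have "Pstar z l u lam1 lam2 (Suc m) a \<le> H z l u lam1 lam2 (Suc m) + ereal lam1" by simp
    then have "Pstar z l u lam1 lam2 (Suc (Suc m)) a = Pstar z l u lam1 lam2 (Suc m) a + gg z l u lam2 (Suc (Suc m)) a"
      unfolding PS by (simp add: min_absorb1)
    also have "\<dots> = P z l u lam1 lam2 (Suc m) i a + gg z l u lam2 (Suc (Suc m)) a"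
      using Suc.IH[OF i aR(1)] by simp
    also have "\<dots> = P z l u lam1 lam2 (Suc (Suc m)) i a"
      using i by (simp add: P_Suc[OF lam1 lam2])
    finally show ?thesis .
  qed
qed

end

theorem proposition3p4:
  fixes z l u :: "nat \<Rightarrow> real" and lam1 lam2 :: real and n :: nat
  assumes "lam1 > 0" and "lam2 > 0"
    and "\<And>i. i \<in> {1..n} \<Longrightarrow> l i \<le> 0 \<and> 0 \<le> u i"
  shows "(1 \<le> n \<longrightarrow> (\<forall>a. Pstar z l u lam1 lam2 1 a
              = ereal ((1/2) * (a - z 1)^2) + omega l u lam2 1 a))
    \<and> (\<forall>s \<in> {2..n}. \<forall>a. Pstar z l u lam1 lam2 s a
          = min (Pstar z l u lam1 lam2 (s-1) a)
                ((INF a'. Pstar z l u lam1 lam2 (s-1) a') + ereal lam1)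
            + ereal ((1/2) * (a - z s)^2) + omega l u lam2 s a)
    \<and> (\<forall>s \<in> {2..n}. (\<Union>i\<in>{0..<s}. R z l u lam1 lam2 s i) = UNIV
          \<and> (\<forall>i\<in>{0..<s}. \<forall>j\<in>{0..<s}. i \<noteq> j \<longrightarrow>
                R z l u lam1 lam2 s i \<inter> R z l u lam1 lam2 s j = {}))
    \<and> (\<forall>s \<in> {1..n}. \<forall>i\<in>{0..<s}. \<forall>a \<in> R z l u lam1 lam2 s i.
          Pstar z l u lam1 lam2 s a = P z l u lam1 lam2 s i a)"
proof -
  note L = assms(1,2)
  have A1: "\<forall>a. Pstar z l u lam1 lam2 1 a = ereal ((1/2) * (a - z 1)^2) + omega l u lam2 1 a"
  proof
    fix a
    have "Pstar z l u lam1 lam2 1 a = P z l u lam1 lam2 1 0 a" by (simp add: Pstar_def)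
    also have "\<dots> = gg z l u lam2 1 a" using P0[OF L, of z l u 1 a] by simp
    finally show "Pstar z l u lam1 lam2 1 a = ereal ((1/2) * (a - z 1)^2) + omega l u lam2 1 a"
      by (simp add: gg_def)
  qed
  have A2: "Pstar z l u lam1 lam2 s a
          = min (Pstar z l u lam1 lam2 (s-1) a)
                ((INF a'. Pstar z l u lam1 lam2 (s-1) a') + ereal lam1)
            + ereal ((1/2) * (a - z s)^2) + omega l u lam2 s a" if s: "s \<in> {2..n}" for s a
  proof -
    have s1: "1 \<le> s - 1" and ss: "Suc (s - 1) = s" using s by auto
    have "Pstar z l u lam1 lam2 s a = min (Pstar z l u lam1 lam2 (s-1) a) (H z l u lam1 lam2 (s-1) + ereal lam1) + gg z l u lam2 s a"
      using Pstar_Suc[OF L s1, of z l u a] unfolding ss .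
    also have "H z l u lam1 lam2 (s-1) = (INF a'. Pstar z l u lam1 lam2 (s-1) a')"
      using bellman[OF L s1] by simp
    finally show ?thesis by (simp add: gg_def add.assoc)
  qed
  have A3: "(\<Union>i\<in>{0..<s}. R z l u lam1 lam2 s i) = UNIV
          \<and> (\<forall>i\<in>{0..<s}. \<forall>j\<in>{0..<s}. i \<noteq> j \<longrightarrow>
                R z l u lam1 lam2 s i \<inter> R z l u lam1 lam2 s j = {})" if s: "s \<in> {2..n}" for s
  proof -
    have ss: "Suc (s - 1) = s" using s by auto
    show ?thesis using R_part[OF L, of z l u "s-1"] unfolding ss .
  qed
  have A4: "Pstar z l u lam1 lam2 s a = P z l u lam1 lam2 s i a"
    if s: "s \<in> {1..n}" and i: "i \<in> {0..<s}" and a: "a \<in> R z l u lam1 lam2 s i" for s i a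
  proof -
    have ss: "Suc (s - 1) = s" using s by auto
    show ?thesis using R_val[OF L, of i "s-1" a z l u] i a unfolding ss by simp
  qed
  show ?thesis using A1 A2 A3 A4 by blast
qed

end
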